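(* Fix $p\ge1$, $\epsilon>0$ and a log-dyadic $\delta\in[0,1)$. For $n\ge1$ let $x_n\in\mathbb{L}_n$, set $r_{n,p}:=\frac{n}{p}-(1+\epsilon)\log_2n$ and $A^{(n)}:={\rm B}_{r_{n',p}}(x_{n'})$. Then, as $n\to\infty$, $W^{p,\infty}\big(\eta^{+,\delta}_{A^{(n)}},\ \eta^{+,\delta}(\infty)\mathbf{1}_{A^{(n)}}\big)\to0$, and there are joint laws of $(h,\eta^{+,\delta}(\infty))$ with marginals ${\rm P}$ and the law of $\eta^{+,\delta}(\infty)$ such that $W^{p,\infty}\big(h^{+,\delta}_{A^{(n)}},\ h_{A^{(n)}}+\eta^{+,\delta}(\infty)\mathbf{1}_{A^{(n)}}\big)\to0$, where $h^{+,\delta}$ has law ${\rm P}^{+,\delta}$.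
   Context: $\mathbb{T}$ is the infinite rooted binary tree with root $0$; $|x|$ is the depth of $x$, $x\wedge y$ the deepest common ancestor; ${\rm B}_r(x)$ is the graph-distance ball; $\mathbb{T}_n$, $\mathbb{L}_n$ are the vertices of depth at most / exactly $n$; $\mathbb{T}(x)$ is the subtree of $x$ and its descendants, identified with $\mathbb{T}$ by a fixed isomorphism sending $0$ to $x$. $l_n=\lfloor\log_2 n\rfloor$, $n'=n-l_n$. $h$ is the centered Gaussian field with ${\rm E}[h(x)h(y)]=|x\wedge y|$; ${\rm P}_n$ its law on $\mathbb{R}^{\mathbb{T}_n}$, ${\rm P}={\rm P}_\infty$. $c_0=\sqrt{2\log2}$, $m_n=c_0n-\frac{3}{2c_0}\log n$, $\Omega_n(u)=\{\min_{\mathbb{L}_n}h\ge -m_n+u\}$; ${\rm P}^{\uparrow u}_{n,v}$ is the law of $h+v$ under ${\rm P}_n(\cdot\mid\Omega_n(u-v))$ and ${\rm P}^{\uparrow u}_v$ its $W^{p,\infty}_{\rm loc}$-limit as $n\to\infty$ (exists). Log-dyadic: of the form $\log_2(q/2^p)$, integers $q\ge1,p\ge0$. ${\rm P}^{+,\delta}$ is the $W^{p,\infty}_{\rm loc}$-limit as $k\to\infty$ of the law of $h_{\mathbb{T}(x_k)}$ ($x_k\in\mathbb{L}_k$) under ${\rm P}^{\uparrow c_0k}_{-c_02^{k+\delta}}$ (exists). $\ddot{\rm P}^{+,\delta}$ is a coupling of fields $h,h^{+,\delta},\eta^{+,\delta}$ on $\mathbb{T}$, invariant in law under automorphisms of $\mathbb{T}$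 fixing $0$ (constructed in the paper), with $h^{+,\delta}=h+\eta^{+,\delta}$ a.s., $h\sim{\rm P}$, $h^{+,\delta}\sim{\rm P}^{+,\delta}$, $\eta^{+,\delta}(0)\sim{\rm P}^{+,\delta}(h(0)\in\cdot)$, and for $x$ a child of $y$, $\|\eta^{+,\delta}(x)-\eta^{+,\delta}(y)\|_p\le C_p|x|2^{-|x|/p}$ ($C_p$ independent of $\delta$) and $\ddot{\rm E}^{+,\delta}(\eta^{+,\delta}(x)-\eta^{+,\delta}(y))\ge0$. Along any infinite branch $(x_n)$ from the root, $\lim_n\eta^{+,\delta}(x_n)$ exists a.s.; its law does not depend on the branch and $\eta^{+,\delta}(\infty)$ denotes a random variable with this law. $W^{p,\infty}$ is the $p$-Wasserstein distance between laws on $\mathbb{R}^{\mathbb{T}}$ w.r.t. the (possibly infinite) sup norm, fields on $A$ extended by $0$ off $A$; $W^{p,\infty}_{\rm loc}$-convergence means $W^{p,\infty}$-convergence of restrictions to each $\mathbb{T}_k$; $\mathbf{1}_A$ is the field equal to $1$ on $A$. *)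

theory Defs
  imports "HOL-Probability.Probability" "HOL-Library.Sublist"
begin

text \<open>Vertices of the infinite rooted binary tree are finite bool lists (the path from
the root); the root 0 is the empty list, the children of x are x @ [b], depth is length,
ancestors are prefixes.\<close>

type_synonym vertex = "bool list"
type_synonym field = "vertex \<Rightarrow> real"

fun lcp :: "vertex \<Rightarrow> vertex \<Rightarrow> vertex" where
  "lcp (a # x) (b # y) = (if a = b then a # lcp x y else [])"
| "lcp _ _ = []"

definition tdist :: "vertex \<Rightarrow> vertex \<Rightarrow> nat" where
  "tdist x y = length x + length y - 2 * length (lcp x y)"

definition ball_T :: "real \<Rightarrow> vertex \<Rightarrow> vertex set" where
  "ball_T r x = {y. real (tdist x y) \<le> r}"

definition T_upto :: "nat \<Rightarrow> vertex set" where "T_upto n = {x. length x \<le> n}"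
definition L_lev :: "nat \<Rightarrow> vertex set" where "L_lev n = {x. length x = n}"

definition tree_aut :: "(vertex \<Rightarrow> vertex) \<Rightarrow> bool" where
  "tree_aut \<sigma> \<longleftrightarrow> bij \<sigma> \<and> \<sigma> [] = [] \<and>
     (\<forall>x y. (\<exists>b. y = x @ [b]) \<longleftrightarrow> (\<exists>b. \<sigma> y = \<sigma> x @ [b]))"

definition fieldM :: "field measure" where
  "fieldM = PiM UNIV (\<lambda>_. borel)"

definition restr :: "vertex set \<Rightarrow> field \<Rightarrow> field" where
  "restr A f = (\<lambda>x. if x \<in> A then f x else 0)"

definition restr_law :: "vertex set \<Rightarrow> field measure \<Rightarrow> field measure" where
  "restr_law A \<mu> = distr \<mu> fieldM (restr A)"

text \<open>The centered Gaussian field with covariance E[h(x)h(y)] = |x \<and> y|, realised as the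
sum of i.i.d. standard normals on the edges along the path from the root.\<close>
definition Pgauss :: "field measure" where
  "Pgauss = distr (PiM UNIV (\<lambda>_::vertex. density lborel std_normal_density)) fieldM
             (\<lambda>\<xi> x. \<Sum>y\<in>{y. prefix y x \<and> y \<noteq> []}. \<xi> y)"

definition Pn :: "nat \<Rightarrow> field measure" where
  "Pn n = restr_law (T_upto n) Pgauss"

definition c0 :: real where "c0 = sqrt (2 * ln 2)"

definition m_n :: "nat \<Rightarrow> real" where
  "m_n n = c0 * real n - 3 / (2 * c0) * ln (real n)"

definition Omega_n :: "nat \<Rightarrow> real \<Rightarrow> field set" where
  "Omega_n n u = {f \<in> space fieldM. \<forall>x\<in>L_lev n. f x \<ge> - m_n n + u}"

definition Pup_n :: "nat \<Rightarrow> real \<Rightarrow> real \<Rightarrow> field measure" where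
  "Pup_n n u v = distr (uniform_measure (Pn n) (Omega_n n (u - v))) fieldM
                   (\<lambda>f. restr (T_upto n) (\<lambda>x. f x + v))"

definition couplings :: "'a measure \<Rightarrow> 'b measure \<Rightarrow> 'a measure \<Rightarrow> 'b measure \<Rightarrow> ('a \<times> 'b) measure set" where
  "couplings MA MB \<mu> \<nu> = {\<pi>. prob_space \<pi> \<and> sets \<pi> = sets (MA \<Otimes>\<^sub>M MB) \<and>
       distr \<pi> MA fst = \<mu> \<and> distr \<pi> MB snd = \<nu>}"

definition Wpow :: "real \<Rightarrow> field measure \<Rightarrow> field measure \<Rightarrow> ennreal" where
  "Wpow p \<mu> \<nu> = (INF \<pi>\<in>couplings fieldM fieldM \<mu> \<nu>.
       \<integral>\<^sup>+ z. (SUP x. ennreal (\<bar>fst z x - snd z x\<bar> powr p)) \<partial>\<pi>)"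

definition Wass :: "real \<Rightarrow> field measure \<Rightarrow> field measure \<Rightarrow> ennreal" where
  "Wass p \<mu> \<nu> = (if Wpow p \<mu> \<nu> = \<top> then \<top> else ennreal (enn2real (Wpow p \<mu> \<nu>) powr (1 / p)))"

definition loc_conv :: "(nat \<Rightarrow> field measure) \<Rightarrow> field measure \<Rightarrow> bool" where
  "loc_conv \<mu>s \<mu> \<longleftrightarrow> prob_space \<mu> \<and> sets \<mu> = sets fieldM \<and>
     (\<forall>p\<ge>1. \<forall>k. (\<lambda>n. Wass p (restr_law (T_upto k) (\<mu>s n)) (restr_law (T_upto k) \<mu>))
                  \<longlonglongrightarrow> 0)"

definition Pup :: "real \<Rightarrow> real \<Rightarrow> field measure" where
  "Pup u v = (THE \<mu>. loc_conv (\<lambda>n. Pup_n n u v) \<mu>)"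

text \<open>x_k = replicate k False; T(x_k) identified with T via y \<mapsto> x_k @ y.\<close>
definition Pplus :: "real \<Rightarrow> field measure" where
  "Pplus \<delta> = (THE \<nu>. loc_conv
      (\<lambda>k. distr (Pup (c0 * real k) (- c0 * 2 powr (real k + \<delta>))) fieldM
               (\<lambda>f y. f (replicate k False @ y))) \<nu>)"

definition log_dyadic :: "real \<Rightarrow> bool" where
  "log_dyadic \<delta> \<longleftrightarrow> (\<exists>q::nat. \<exists>p::nat. q \<ge> 1 \<and> \<delta> = log 2 (real q / 2 ^ p))"

definition eta_lim :: "('w \<Rightarrow> field) \<Rightarrow> (nat \<Rightarrow> bool) \<Rightarrow> 'w \<Rightarrow> real" where
  "eta_lim Eta bs \<omega> = lim (\<lambda>n. Eta \<omega> (map bs [0..<n]))"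

definition plus_coupling :: "real \<Rightarrow> 'w measure \<Rightarrow> ('w \<Rightarrow> field) \<Rightarrow> ('w \<Rightarrow> field) \<Rightarrow> bool" where
  "plus_coupling \<delta> M H Eta \<longleftrightarrow>
     prob_space M \<and> H \<in> M \<rightarrow>\<^sub>M fieldM \<and> Eta \<in> M \<rightarrow>\<^sub>M fieldM \<and>
     (\<forall>\<sigma>. tree_aut \<sigma> \<longrightarrow>
        distr M (fieldM \<Otimes>\<^sub>M fieldM) (\<lambda>\<omega>. (H \<omega> \<circ> \<sigma>, Eta \<omega> \<circ> \<sigma>))
          = distr M (fieldM \<Otimes>\<^sub>M fieldM) (\<lambda>\<omega>. (H \<omega>, Eta \<omega>))) \<and>
     distr M fieldM H = Pgauss \<and>
     distr M fieldM (\<lambda>\<omega>. \<lambda>x. H \<omega> x + Eta \<omega> x) = Pplus \<delta> \<and>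
     distr M borel (\<lambda>\<omega>. Eta \<omega> []) = distr (Pplus \<delta>) borel (\<lambda>f. f []) \<and>
     (\<forall>q\<ge>1. \<exists>C. \<forall>y b.
        (\<integral>\<^sup>+\<omega>. ennreal (\<bar>Eta \<omega> (y @ [b]) - Eta \<omega> y\<bar> powr q) \<partial>M)
          \<le> ennreal ((C * real (length (y @ [b])) * 2 powr (- real (length (y @ [b])) / q)) powr q)) \<and>
     (\<forall>y b. integral\<^sup>L M (\<lambda>\<omega>. Eta \<omega> (y @ [b]) - Eta \<omega> y) \<ge> 0) \<and>
     (\<forall>bs. AE \<omega> in M. convergent (\<lambda>n. Eta \<omega> (map bs [0..<n]))) \<and>
     (\<forall>bs bs'. distr M borel (eta_lim Eta bs) = distr M borel (eta_lim Eta bs'))"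

end

theory Submission
  imports Defs "HOL-Real_Asymp.Real_Asymp"
begin


lemma fieldM_comp_meas:
  assumes "F \<in> M \<rightarrow>\<^sub>M fieldM"
  shows "(\<lambda>\<omega>. F \<omega> x) \<in> borel_measurable M"
  using assms unfolding fieldM_def
  by (rule measurable_compose[OF _ measurable_component_singleton]) simp

lemma to_fieldM_meas:
  assumes "\<And>x. (\<lambda>\<omega>. F \<omega> x) \<in> borel_measurable M"
  shows "F \<in> M \<rightarrow>\<^sub>M fieldM"
  unfolding fieldM_def
  using measurable_PiM_single'[of UNIV "\<lambda>x \<omega>. F \<omega> x" M "\<lambda>_. borel"] assms
  by auto

lemma sup_integrand_meas:
  "(\<lambda>z::field \<times> field. SUP x. ennreal (\<bar>fst z x - snd z x\<bar> powr p)) \<in> borel_measurable (fieldM \<Otimes>\<^sub>M fieldM)"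
proof -
  have "\<And>x. (\<lambda>z::field \<times> field. ennreal (\<bar>fst z x - snd z x\<bar> powr p)) \<in> borel_measurable (fieldM \<Otimes>\<^sub>M fieldM)"
  proof -
    fix x
    have a: "(\<lambda>z::field \<times> field. fst z x) \<in> borel_measurable (fieldM \<Otimes>\<^sub>M fieldM)"
      by (rule fieldM_comp_meas[of fst]) simp
    have b: "(\<lambda>z::field \<times> field. snd z x) \<in> borel_measurable (fieldM \<Otimes>\<^sub>M fieldM)"
      by (rule fieldM_comp_meas[of snd]) simp
    show "?thesis x" using a b by measurable
  qed
  then show ?thesis by (intro borel_measurable_SUP) auto
qed

lemma Wpow_le:
  assumes "prob_space M" "F1 \<in> M \<rightarrow>\<^sub>M fieldM" "F2 \<in> M \<rightarrow>\<^sub>M fieldM"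
  shows "Wpow p (distr M fieldM F1) (distr M fieldM F2)
           \<le> (\<integral>\<^sup>+\<omega>. (SUP x. ennreal (\<bar>F1 \<omega> x - F2 \<omega> x\<bar> powr p)) \<partial>M)"
proof -
  let ?F = "\<lambda>\<omega>. (F1 \<omega>, F2 \<omega>)"
  have mF: "?F \<in> M \<rightarrow>\<^sub>M fieldM \<Otimes>\<^sub>M fieldM" using assms(2,3) by measurable
  let ?\<pi> = "distr M (fieldM \<Otimes>\<^sub>M fieldM) ?F"
  have "?\<pi> \<in> couplings fieldM fieldM (distr M fieldM F1) (distr M fieldM F2)"
    unfolding couplings_def
  proof (intro CollectI conjI)
    show "prob_space ?\<pi>" using mF prob_space.prob_space_distr[OF assms(1)] by blast
    show "sets ?\<pi> = sets (fieldM \<Otimes>\<^sub>M fieldM)" by simp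
    show "distr ?\<pi> fieldM fst = distr M fieldM F1"
      using distr_distr[OF measurable_fst mF] by (simp add: comp_def)
    show "distr ?\<pi> fieldM snd = distr M fieldM F2"
      using distr_distr[OF measurable_snd mF] by (simp add: comp_def)
  qed
  then have "Wpow p (distr M fieldM F1) (distr M fieldM F2)
      \<le> \<integral>\<^sup>+ z. (SUP x. ennreal (\<bar>fst z x - snd z x\<bar> powr p)) \<partial>?\<pi>"
    unfolding Wpow_def by (rule INF_lower)
  also have "\<dots> = (\<integral>\<^sup>+\<omega>. (SUP x. ennreal (\<bar>F1 \<omega> x - F2 \<omega> x\<bar> powr p)) \<partial>M)"
    by (subst nn_integral_distr[OF mF]) (use sup_integrand_meas in auto)
  finally show ?thesis .
qed

lemma Wass_tendsto:
  assumes "p \<ge> 1" "eventually (\<lambda>n. Wpow p (\<mu> n) (\<nu> n) \<le> ennreal (b n)) sequentially" "b \<longlonglongrightarrow> 0" "\<And>n. 0 \<le> b n"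
  shows "(\<lambda>n. Wass p (\<mu> n) (\<nu> n)) \<longlonglongrightarrow> 0"
proof -
  have le: "Wass p (\<mu> n) (\<nu> n) \<le> ennreal (b n powr (1/p))" if h: "Wpow p (\<mu> n) (\<nu> n) \<le> ennreal (b n)" for n
  proof -
    have nt: "Wpow p (\<mu> n) (\<nu> n) \<noteq> \<top>" using h by (auto simp: top_unique)
    have "enn2real (Wpow p (\<mu> n) (\<nu> n)) \<le> b n"
      using h assms(4)[of n] nt by (simp add: enn2real_leI)
    then have "enn2real (Wpow p (\<mu> n) (\<nu> n)) powr (1/p) \<le> b n powr (1/p)"
      using assms(1) by (intro powr_mono2) auto
    then show ?thesis unfolding Wass_def using nt by (simp add: ennreal_leI)
  qed
  have "(\<lambda>n. b n powr (1/p)) \<longlonglongrightarrow> 0"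
    using assms by (intro tendsto_zero_powrI) auto
  then have t: "(\<lambda>n. ennreal (b n powr (1/p))) \<longlonglongrightarrow> 0"
    using tendsto_ennrealI[of "\<lambda>n. b n powr (1/p)" 0] by simp
  show ?thesis
    by (rule tendsto_sandwich[OF _ _ tendsto_const t]) (use le assms(2) in \<open>auto elim: eventually_mono\<close>)
qed


lemma lcp_prefix1: "prefix (lcp x y) x"
  by (induction x y rule: lcp.induct) auto
lemma lcp_prefix2: "prefix (lcp x y) y"
  by (induction x y rule: lcp.induct) auto
lemma lcp_greatest: "prefix a x \<Longrightarrow> prefix a y \<Longrightarrow> prefix a (lcp x y)"
proof (induction x y arbitrary: a rule: lcp.induct)
  case (1 u x v y)
  then show ?case by (cases a) auto
qed auto
lemma lcp_sym: "lcp x y = lcp y x"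
  by (induction x y rule: lcp.induct) auto

lemma path_bound:
  fixes f :: "vertex \<Rightarrow> real"
  assumes "prefix a z"
  shows "\<bar>f z - f a\<bar> \<le> (\<Sum>y\<in>{y. prefix y z \<and> length a < length y}. \<bar>f y - f (butlast y)\<bar>)"
  using assms
proof (induction z rule: rev_induct)
  case Nil
  then show ?case by simp
next
  case (snoc b z)
  show ?case
  proof (cases "a = z @ [b]")
    case True
    then show ?thesis by (simp add: sum_nonneg)
  next
    case False
    then have pz: "prefix a z" using snoc.prems by (simp add: prefix_snoc)
    have eq: "{y. prefix y (z @ [b]) \<and> length a < length y}
        = insert (z @ [b]) {y. prefix y z \<and> length a < length y}"
      using pz prefix_length_le[OF pz] by (auto simp: prefix_snoc)
    have fin: "finite {y. prefix y z \<and> length a < length y}"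
      by (rule finite_subset[of _ "set (prefixes z)"]) auto
    have nin: "z @ [b] \<notin> {y. prefix y z \<and> length a < length y}"
      using prefix_length_le by fastforce
    have "\<bar>f (z @ [b]) - f a\<bar> \<le> \<bar>f (z @ [b]) - f z\<bar> + \<bar>f z - f a\<bar>" by simp
    also have "\<dots> \<le> \<bar>f (z @ [b]) - f (butlast (z @ [b]))\<bar>
        + (\<Sum>y\<in>{y. prefix y z \<and> length a < length y}. \<bar>f y - f (butlast y)\<bar>)"
      using snoc.IH[OF pz] by simp
    also have "\<dots> = (\<Sum>y\<in>{y. prefix y (z @ [b]) \<and> length a < length y}. \<bar>f y - f (butlast y)\<bar>)"
      unfolding eq using fin nin by simp
    finally show ?thesis .
  qed
qed

lemma finite_prefixes_set: "finite {y. prefix y z \<and> P y}"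
  by (rule finite_subset[of _ "set (prefixes z)"]) auto

lemma weight_sum:
  fixes w :: "nat \<Rightarrow> real"
  assumes "\<And>i. 0 \<le> w i" "summable w"
  shows "(\<Sum>y\<in>{y. prefix y z \<and> P y}. w (length y)) \<le> (\<Sum>i. w i)"
proof -
  have sub: "{y. prefix y z \<and> P y} \<subseteq> (\<lambda>i. take i z) ` {..length z}"
  proof
    fix y assume "y \<in> {y. prefix y z \<and> P y}"
    then have "prefix y z" by simp
    then have "y = take (length y) z" "length y \<le> length z"
      by (auto simp: prefix_def)
    then show "y \<in> (\<lambda>i. take i z) ` {..length z}" by auto
  qed
  have "(\<Sum>y\<in>{y. prefix y z \<and> P y}. w (length y)) \<le> (\<Sum>y\<in>(\<lambda>i. take i z) ` {..length z}. w (length y))"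
    by (rule sum_mono2[OF _ sub]) (auto simp: assms)
  also have "\<dots> \<le> (\<Sum>i\<in>{..length z}. w (length (take i z)))"
    using sum_image_le[of "{..length z}" "\<lambda>y. w (length y)" "\<lambda>i. take i z"] assms by (simp add: comp_def)
  also have "\<dots> = (\<Sum>i\<in>{..length z}. w i)" by (rule sum.cong) auto
  also have "\<dots> \<le> (\<Sum>i. w i)" by (rule sum_le_suminf) (auto simp: assms)
  finally show ?thesis .
qed

lemma card_lev:
  fixes a :: vertex
  assumes "length a \<le> k"
  shows "card {y. prefix a y \<and> length y = k} = 2 ^ (k - length a)"
proof -
  have eq: "{y. prefix a y \<and> length y = k} = (\<lambda>z. a @ z) ` {z. set z \<subseteq> UNIV \<and> length z = k - length a}"
    using assms by (auto simp: prefix_def)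
  have "card {y. prefix a y \<and> length y = k} = card {z::bool list. set z \<subseteq> UNIV \<and> length z = k - length a}"
    unfolding eq by (rule card_image) (simp add: inj_on_def)
  also have "\<dots> = 2 ^ (k - length a)"
    by (subst card_lists_length_eq) auto
  finally show ?thesis .
qed

lemma finite_lev: "finite {y::vertex. prefix a y \<and> length y = k}"
proof -
  have "{y::vertex. prefix a y \<and> length y = k} \<subseteq> {z. set z \<subseteq> UNIV \<and> length z = k}" by auto
  then show ?thesis by (rule finite_subset) (rule finite_lists_length_eq, simp)
qed



lemma v_length: "length (map bs [0..<k]) = k" by simp

lemma v_take:
  assumes "k \<le> length c" "\<And>i. i < length c \<Longrightarrow> bs i = c ! i"
  shows "map bs [0..<k] = take k c"
  using assms by (intro nth_equalityI) auto

lemma v_prefix_of_prefix: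
  assumes "prefix y (map bs [0..<k])"
  shows "y = map bs [0..<length y]"
proof -
  from assms obtain zs where "map bs [0..<k] = y @ zs" by (auto simp: prefix_def)
  then have "take (length y) (map bs [0..<k]) = y" by (metis append_eq_conv_conj)
  moreover have "length y \<le> k" using assms prefix_length_le by fastforce
  ultimately show ?thesis by (simp add: take_map)
qed

lemma v_prefix_mono: "i \<le> k \<Longrightarrow> prefix (map bs [0..<i]) (map bs [0..<k])"
proof -
  assume "i \<le> k"
  then have "map bs [0..<k] = map bs [0..<i] @ map bs [i..<k]"
    by (metis map_append le_add_diff_inverse upt_add_eq_append zero_le)
  then show ?thesis by (simp add: prefix_def)
qed

lemma take_prefix_eq: "prefix a c \<Longrightarrow> take (length a) c = a"
  by (auto simp: prefix_def)

lemma tdist_eq: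
  "real (tdist c x) = real (length c) + real (length x) - 2 * real (length (lcp c x))"
proof -
  have "length (lcp c x) \<le> length c" "length (lcp c x) \<le> length x"
    using prefix_length_le[OF lcp_prefix1] prefix_length_le[OF lcp_prefix2] by auto
  then show ?thesis unfolding tdist_def by (simp add: of_nat_diff)
qed

lemma powr_root_le:
  fixes d w R p :: real
  assumes "0 \<le> d" "0 < w" "p \<ge> 1" "(d / w) powr p \<le> R"
  shows "d \<le> w * R powr (1/p)"
proof -
  have "d / w = ((d / w) powr p) powr (1/p)"
    using assms by (simp add: powr_powr)
  also have "\<dots> \<le> R powr (1/p)"
    using assms by (intro powr_mono2) auto
  finally show ?thesis using assms by (simp add: field_simps)
qed

lemma pointwise_bound:
  fixes Et :: "vertex \<Rightarrow> real" and c x :: vertex and r p :: real and bs :: "nat \<Rightarrow> bool"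
  assumes p: "p \<ge> 1" and lc: "length c = N"
    and bs: "\<And>i. i < N \<Longrightarrow> bs i = c ! i"
    and conv: "convergent (\<lambda>k. Et (map bs [0..<k]))"
    and xA: "x \<in> ball_T r c"
    and w_def: "w = (\<lambda>k::nat. 2 powr (- real k / (4 * p)))"
    and S_def: "S = (\<Sum>i. w i)"
    and D_def: "D = (\<lambda>y. \<bar>Et y - Et (butlast y)\<bar>)"
    and Q_def: "Q = (\<Sum>j\<in>{j. j \<le> N \<and> real N - r \<le> real j}.
                 \<Sum>k\<in>{k. j \<le> k \<and> real k + real N - 2 * real j \<le> r}.
                 \<Sum>y\<in>{y. prefix (take j c) y \<and> length y = k}. (D y / w k) powr p)"
    and T_def: "T = (\<Sum>i. ennreal ((D (map bs [0..<N+1+i]) / w (N+1+i)) powr p))"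
  shows "ennreal (\<bar>Et x - lim (\<lambda>k. Et (map bs [0..<k]))\<bar> powr p)
           \<le> ennreal ((3 * S) powr p) * (ennreal Q + T)"
proof -
  define v where "v = (\<lambda>k. map bs [0..<k])"
  define J where "J = {j. j \<le> N \<and> real N - r \<le> real j}"
  define K where "K = (\<lambda>j. {k. j \<le> k \<and> real k + real N - 2 * real j \<le> r})"
  define Lev where "Lev = (\<lambda>j k. {y. prefix (take j c) y \<and> length y = k})"
  have wpos: "0 < w k" for k unfolding w_def by simp
  have sumw: "summable w"
  proof -
    have "w = (\<lambda>k. (2 powr (- 1 / (4 * p))) ^ k)"
      unfolding w_def by (rule ext, subst powr_realpow[symmetric]) (auto simp: powr_powr)
    moreover have "2 powr (- 1 / (4 * p)) < 1" using p by (intro powr_less_one) auto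
    ultimately show ?thesis by (simp add: summable_geometric)
  qed
  have Spos: "0 < S" unfolding S_def
    using suminf_pos[OF sumw wpos] .
  have finJ: "finite J" unfolding J_def by (rule finite_subset[of _ "{..N}"]) auto
  have finK: "finite (K j)" for j
  proof -
    have "K j \<subseteq> {..nat \<lceil>r + 2 * real j\<rceil>}"
    proof
      fix k assume "k \<in> K j"
      then have "real k \<le> r + 2 * real j" unfolding K_def by auto
      then show "k \<in> {..nat \<lceil>r + 2 * real j\<rceil>}" by (simp add: le_nat_iff ceiling_le_iff le_ceiling_iff)
    qed
    then show ?thesis by (rule finite_subset) auto
  qed
  have finL: "finite (Lev j k)" for j k unfolding Lev_def by (rule finite_lev)
  have Dnn: "0 \<le> D y" for y unfolding D_def by simp
  have termnn: "0 \<le> (D y / w k) powr p" for y k by simp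
  have Qeq: "Q = (\<Sum>j\<in>J. \<Sum>k\<in>K j. \<Sum>y\<in>Lev j k. (D y / w k) powr p)"
    unfolding Q_def J_def K_def Lev_def ..
  have Qnn: "0 \<le> Q" unfolding Qeq by (intro sum_nonneg) simp
  have inQ: "(D y / w (length y)) powr p \<le> Q"
    if "j \<in> J" "length y \<in> K j" "y \<in> Lev j (length y)" for j y
  proof -
    have "(D y / w (length y)) powr p \<le> (\<Sum>u\<in>Lev j (length y). (D u / w (length y)) powr p)"
      by (rule member_le_sum[OF that(3) _ finL]) simp
    also have "\<dots> \<le> (\<Sum>k\<in>K j. \<Sum>y\<in>Lev j k. (D y / w k) powr p)"
      using member_le_sum[OF that(2), of "\<lambda>k. \<Sum>y\<in>Lev j k. (D y / w k) powr p"] finK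
      by (simp add: sum_nonneg)
    also have "\<dots> \<le> Q" unfolding Qeq
      using member_le_sum[OF that(1), of "\<lambda>j. \<Sum>k\<in>K j. \<Sum>y\<in>Lev j k. (D y / w k) powr p"] finJ
      by (simp add: sum_nonneg)
    finally show ?thesis .
  qed
  show ?thesis
  proof (cases "T = \<top>")
    case True
    have "0 < (3 * S) powr p" using Spos by simp
    then show ?thesis using True by (simp add: ennreal_mult_top)
  next
    case False
    then obtain t where Tt: "T = ennreal t" and tnn: "0 \<le> t"
      by (cases T rule: ennreal_cases) auto
    define R where "R = Q + t"
    have Rnn: "0 \<le> R" unfolding R_def using Qnn tnn by simp
    define a where "a = lcp x c"
    define j where "j = length a"
    have pa_x: "prefix a x" unfolding a_def by (rule lcp_prefix1)
    have pa_c: "prefix a c" unfolding a_def by (rule lcp_prefix2)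
    have jN: "j \<le> N" using prefix_length_le[OF pa_c] lc unfolding j_def by simp
    have jx: "j \<le> length x" using prefix_length_le[OF pa_x] unfolding j_def by simp
    have tk: "take j c = a" unfolding j_def by (rule take_prefix_eq[OF pa_c])
    have dist: "real N + real (length x) - 2 * real j \<le> r"
      using xA tdist_eq[of c x] lc unfolding ball_T_def a_def j_def by (simp add: lcp_sym)
    have jJ: "j \<in> J" unfolding J_def using jN jx dist by auto
    have key: "D y \<le> w (length y) * R powr (1/p)" if "(D y / w (length y)) powr p \<le> R" for y
      by (rule powr_root_le[OF Dnn wpos p that])
    have P1: "D y \<le> w (length y) * R powr (1/p)" if "y \<in> {y. prefix y x \<and> length a < length y}" for y
    proof -
      from that have py: "prefix y x" and ly: "j < length y" unfolding j_def by auto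
      have "prefix a y" using prefix_length_prefix[OF pa_x py] ly unfolding j_def by simp
      then have "y \<in> Lev j (length y)" unfolding Lev_def tk by simp
      moreover have "length y \<in> K j" unfolding K_def
        using ly prefix_length_le[OF py] dist by auto
      ultimately have "(D y / w (length y)) powr p \<le> Q" using inQ jJ by blast
      then show ?thesis using key Qnn tnn unfolding R_def by auto
    qed
    have P2: "D y \<le> w (length y) * R powr (1/p)" if "y \<in> {y. prefix y c \<and> length a < length y}" for y
    proof -
      from that have py: "prefix y c" and ly: "j < length y" unfolding j_def by auto
      define i where "i = length y"
      have iN: "i \<le> N" using prefix_length_le[OF py] lc unfolding i_def by simp
      have iJ: "i \<in> J" unfolding J_def using iN ly jJ unfolding i_def J_def by auto
      have "y \<in> Lev i (length y)" unfolding Lev_def i_def using take_prefix_eq[OF py] by simp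
      moreover have "length y \<in> K i" unfolding K_def i_def using iJ unfolding J_def i_def by auto
      ultimately have "(D y / w (length y)) powr p \<le> Q" using inQ iJ by blast
      then show ?thesis using key Qnn tnn unfolding R_def by auto
    qed
    have P3: "D y \<le> w (length y) * R powr (1/p)" if "y \<in> {y. prefix y (v k) \<and> length c < length y}" for y k
    proof -
      from that have py: "prefix y (v k)" and ly: "N < length y" using lc by auto
      have yv: "y = v (length y)" using v_prefix_of_prefix[of y bs k] py unfolding v_def by simp
      define i where "i = length y - N - 1"
      have li: "length y = N + 1 + i" unfolding i_def using ly by simp
      have yv': "y = map bs [0..<N+1+i]" using yv li unfolding v_def by metis
      define f where "f = (\<lambda>i. ennreal ((D (map bs [0..<N+1+i]) / w (N+1+i)) powr p))"
      have "f i \<le> T"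
        unfolding T_def f_def[symmetric]
        using sum_le_suminf[OF summableI, of "{i}" f] by simp
      moreover have "f i = ennreal ((D y / w (length y)) powr p)"
        unfolding f_def using yv' by simp
      ultimately have "ennreal ((D y / w (length y)) powr p) \<le> T" by simp
      then have "(D y / w (length y)) powr p \<le> t" using Tt tnn by simp
      then show ?thesis using key Qnn unfolding R_def by auto
    qed
    have sumP: "(\<Sum>y\<in>{y. prefix y z \<and> length b < length y}. D y) \<le> S * R powr (1/p)"
      if "\<And>y. y \<in> {y. prefix y z \<and> length b < length y} \<Longrightarrow> D y \<le> w (length y) * R powr (1/p)" for z b
    proof -
      have "(\<Sum>y\<in>{y. prefix y z \<and> length b < length y}. D y)
          \<le> (\<Sum>y\<in>{y. prefix y z \<and> length b < length y}. w (length y) * R powr (1/p))"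
        by (rule sum_mono) (rule that)
      also have "\<dots> = (\<Sum>y\<in>{y. prefix y z \<and> length b < length y}. w (length y)) * R powr (1/p)"
        by (simp add: sum_distrib_right)
      also have "\<dots> \<le> S * R powr (1/p)"
        unfolding S_def
        by (rule mult_right_mono[OF weight_sum]) (use wpos sumw in \<open>auto simp: less_imp_le\<close>)
      finally show ?thesis .
    qed
    have bound_k: "\<bar>Et x - Et (v k)\<bar> \<le> 3 * S * R powr (1/p)" if "N \<le> k" for k
    proof -
      have pcv: "prefix c (v k)"
      proof -
        have "v N = c" unfolding v_def using v_take[of N c bs] lc bs by simp
        then show ?thesis using v_prefix_mono[OF that, of bs] unfolding v_def by simp
      qed
      have "\<bar>Et x - Et (v k)\<bar> \<le> \<bar>Et x - Et a\<bar> + \<bar>Et c - Et a\<bar> + \<bar>Et (v k) - Et c\<bar>" by simp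
      also have "\<dots> \<le> (\<Sum>y\<in>{y. prefix y x \<and> length a < length y}. D y)
                    + (\<Sum>y\<in>{y. prefix y c \<and> length a < length y}. D y)
                    + (\<Sum>y\<in>{y. prefix y (v k) \<and> length c < length y}. D y)"
        unfolding D_def
        by (intro add_mono path_bound pa_x pa_c pcv)
      also have "\<dots> \<le> S * R powr (1/p) + S * R powr (1/p) + S * R powr (1/p)"
        by (intro add_mono sumP P1 P2 P3) auto
      finally show ?thesis by simp
    qed
    have lim: "(\<lambda>k. Et (v k)) \<longlonglongrightarrow> lim (\<lambda>k. Et (map bs [0..<k]))"
      using conv unfolding v_def by (simp add: convergent_LIMSEQ_iff)
    have "\<bar>Et x - lim (\<lambda>k. Et (map bs [0..<k]))\<bar> \<le> 3 * S * R powr (1/p)"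
      by (rule LIMSEQ_le_const2[OF tendsto_rabs[OF tendsto_diff[OF tendsto_const lim]]])
         (use bound_k in auto)
    then have "\<bar>Et x - lim (\<lambda>k. Et (map bs [0..<k]))\<bar> powr p \<le> (3 * S * R powr (1/p)) powr p"
      using p by (intro powr_mono2) auto
    also have "\<dots> = (3 * S) powr p * R"
      using p Rnn by (simp add: powr_mult powr_powr)
    finally have fin: "\<bar>Et x - lim (\<lambda>k. Et (map bs [0..<k]))\<bar> powr p \<le> (3 * S) powr p * R" .
    have "ennreal (\<bar>Et x - lim (\<lambda>k. Et (map bs [0..<k]))\<bar> powr p) \<le> ennreal ((3 * S) powr p * R)"
      using fin by (rule ennreal_leI)
    also have "\<dots> = ennreal ((3 * S) powr p) * (ennreal Q + T)"
      unfolding R_def Tt using Qnn tnn by (simp add: ennreal_mult ennreal_plus)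
    finally show ?thesis .
  qed
qed



lemma integral_bound:
  fixes Eta :: "'w \<Rightarrow> field" and L :: "'w \<Rightarrow> real" and c :: vertex and r p C :: real
    and bs :: "nat \<Rightarrow> bool"
  assumes p: "p \<ge> 1" and lc: "length c = N"
    and bs: "\<And>i. i < N \<Longrightarrow> bs i = c ! i"
    and meas: "Eta \<in> M \<rightarrow>\<^sub>M fieldM"
    and conv: "AE \<omega> in M. convergent (\<lambda>k. Eta \<omega> (map bs [0..<k]))"
    and L_def: "L = (\<lambda>\<omega>. lim (\<lambda>k. Eta \<omega> (map bs [0..<k])))"
    and mom: "\<And>y b. (\<integral>\<^sup>+\<omega>. ennreal (\<bar>Eta \<omega> (y @ [b]) - Eta \<omega> y\<bar> powr p) \<partial>M)
          \<le> ennreal ((C * real (length (y @ [b])) * 2 powr (- real (length (y @ [b])) / p)) powr p)"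
    and w_def: "w = (\<lambda>k::nat. 2 powr (- real k / (4 * p)))"
    and S_def: "S = (\<Sum>i. w i)"
    and g_def: "g = (\<lambda>k::nat. (C * real k * 2 powr (- real k / p)) powr p / w k powr p)"
    and sg: "summable g"
  shows "(\<integral>\<^sup>+\<omega>. (SUP x. (if x \<in> ball_T r c then ennreal (\<bar>Eta \<omega> x - L \<omega>\<bar> powr p) else 0)) \<partial>M)
     \<le> ennreal ((3 * S) powr p) *
        (ennreal (\<Sum>j\<in>{j. j \<le> N \<and> real N - r \<le> real j}.
                 \<Sum>k\<in>{k. j \<le> k \<and> real k + real N - 2 * real j \<le> r}. 2 ^ (k - j) * g k)
         + ennreal (\<Sum>i. g (N + 1 + i)))"
proof -
  have [measurable]: "(\<lambda>\<omega>. Eta \<omega> y) \<in> borel_measurable M" for y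
    by (rule fieldM_comp_meas[OF meas])
  define J where "J = {j. j \<le> N \<and> real N - r \<le> real j}"
  define K where "K = (\<lambda>j. {k. j \<le> k \<and> real k + real N - 2 * real j \<le> r})"
  define Lev where "Lev = (\<lambda>j k. {y. prefix (take j c) y \<and> length y = k})"
  define D where "D = (\<lambda>\<omega> y. \<bar>Eta \<omega> y - Eta \<omega> (butlast y)\<bar>)"
  define Q where "Q = (\<lambda>\<omega>. \<Sum>j\<in>J. \<Sum>k\<in>K j. \<Sum>y\<in>Lev j k. (D \<omega> y / w k) powr p)"
  define T where "T = (\<lambda>\<omega>. \<Sum>i. ennreal ((D \<omega> (map bs [0..<N+1+i]) / w (N+1+i)) powr p))"
  have wpos: "0 < w k" for k unfolding w_def by simp
  have gnn: "0 \<le> g k" for k unfolding g_def using wpos by simp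
  have [measurable]: "(\<lambda>\<omega>. D \<omega> y) \<in> borel_measurable M" for y unfolding D_def by measurable
  have single: "(\<integral>\<^sup>+\<omega>. ennreal ((D \<omega> y / w (length y)) powr p) \<partial>M) \<le> ennreal (g (length y))" for y
  proof (cases y rule: rev_cases)
    case Nil
    then show ?thesis unfolding D_def by simp
  next
    case (snoc y' b)
    have "(\<integral>\<^sup>+\<omega>. ennreal ((D \<omega> y / w (length y)) powr p) \<partial>M)
        = (\<integral>\<^sup>+\<omega>. ennreal (\<bar>Eta \<omega> (y' @ [b]) - Eta \<omega> y'\<bar> powr p) * ennreal (1 / w (length y) powr p) \<partial>M)"
      unfolding D_def snoc
    proof (intro nn_integral_cong)
      fix \<omega>
      have "(\<bar>Eta \<omega> (butlast (y' @ [b])) - Eta \<omega> y'\<bar>) = 0 \<or> True" by simp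
      have e: "(\<bar>Eta \<omega> (y' @ [b]) - Eta \<omega> y'\<bar> / w (length (y' @ [b]))) powr p
          = \<bar>Eta \<omega> (y' @ [b]) - Eta \<omega> y'\<bar> powr p * (1 / w (length (y' @ [b])) powr p)"
        by (simp add: powr_divide)
      show "ennreal ((\<bar>Eta \<omega> (y' @ [b]) - Eta \<omega> (butlast (y' @ [b]))\<bar> / w (length (y' @ [b]))) powr p)
          = ennreal (\<bar>Eta \<omega> (y' @ [b]) - Eta \<omega> y'\<bar> powr p) * ennreal (1 / w (length (y' @ [b])) powr p)"
        unfolding butlast_snoc e by (rule ennreal_mult) simp_all
    qed
    also have "\<dots> = (\<integral>\<^sup>+\<omega>. ennreal (\<bar>Eta \<omega> (y' @ [b]) - Eta \<omega> y'\<bar> powr p) \<partial>M) * ennreal (1 / w (length y) powr p)"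
      by (rule nn_integral_multc) measurable
    also have "\<dots> \<le> ennreal ((C * real (length (y' @ [b])) * 2 powr (- real (length (y' @ [b])) / p)) powr p)
                    * ennreal (1 / w (length y) powr p)"
      by (intro mult_right_mono mom) simp
    also have "\<dots> = ennreal (g (length y))"
      unfolding g_def snoc by (subst ennreal_mult[symmetric]) simp_all
    finally show ?thesis .
  qed
  have pw: "AE \<omega> in M. (SUP x. (if x \<in> ball_T r c then ennreal (\<bar>Eta \<omega> x - L \<omega>\<bar> powr p) else 0))
      \<le> ennreal ((3 * S) powr p) * (ennreal (Q \<omega>) + T \<omega>)"
    using conv
  proof eventually_elim
    case (elim \<omega>)
    show ?case
    proof (rule SUP_least)
      fix x
      show "(if x \<in> ball_T r c then ennreal (\<bar>Eta \<omega> x - L \<omega>\<bar> powr p) else 0)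
          \<le> ennreal ((3 * S) powr p) * (ennreal (Q \<omega>) + T \<omega>)"
      proof (cases "x \<in> ball_T r c")
        case True
        have "ennreal (\<bar>Eta \<omega> x - lim (\<lambda>k. Eta \<omega> (map bs [0..<k]))\<bar> powr p)
           \<le> ennreal ((3 * S) powr p) * (ennreal (Q \<omega>) + T \<omega>)"
          by (rule pointwise_bound[OF p lc bs elim True w_def S_def refl])
             (simp_all add: Q_def J_def K_def Lev_def D_def T_def)
        then show ?thesis using True unfolding L_def by simp
      qed simp
    qed
  qed
  have "(\<integral>\<^sup>+\<omega>. (SUP x. (if x \<in> ball_T r c then ennreal (\<bar>Eta \<omega> x - L \<omega>\<bar> powr p) else 0)) \<partial>M)
      \<le> (\<integral>\<^sup>+\<omega>. ennreal ((3 * S) powr p) * (ennreal (Q \<omega>) + T \<omega>) \<partial>M)"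
    by (rule nn_integral_mono_AE[OF pw])
  also have "\<dots> = ennreal ((3 * S) powr p) * ((\<integral>\<^sup>+\<omega>. ennreal (Q \<omega>) \<partial>M) + (\<integral>\<^sup>+\<omega>. T \<omega> \<partial>M))"
  proof -
    have mQ: "(\<lambda>\<omega>. Q \<omega>) \<in> borel_measurable M" unfolding Q_def
      by (intro borel_measurable_sum) simp
    have mT: "T \<in> borel_measurable M" unfolding T_def
      by (intro borel_measurable_suminf_order) simp
    have "(\<integral>\<^sup>+\<omega>. ennreal ((3 * S) powr p) * (ennreal (Q \<omega>) + T \<omega>) \<partial>M)
        = ennreal ((3 * S) powr p) * (\<integral>\<^sup>+\<omega>. (ennreal (Q \<omega>) + T \<omega>) \<partial>M)"
      by (rule nn_integral_cmult) (use mQ mT in simp)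
    also have "(\<integral>\<^sup>+\<omega>. (ennreal (Q \<omega>) + T \<omega>) \<partial>M) = (\<integral>\<^sup>+\<omega>. ennreal (Q \<omega>) \<partial>M) + (\<integral>\<^sup>+\<omega>. T \<omega> \<partial>M)"
      by (rule nn_integral_add) (use mQ mT in simp_all)
    finally show ?thesis .
  qed
  also have "\<dots> \<le> ennreal ((3 * S) powr p) *
        (ennreal (\<Sum>j\<in>J. \<Sum>k\<in>K j. 2 ^ (k - j) * g k) + ennreal (\<Sum>i. g (N + 1 + i)))"
  proof (intro mult_left_mono add_mono)
    have int3: "(\<integral>\<^sup>+\<omega>. (\<Sum>j\<in>J. \<Sum>k\<in>K j. \<Sum>y\<in>Lev j k. F \<omega> j k y) \<partial>M)
        = (\<Sum>j\<in>J. \<Sum>k\<in>K j. \<Sum>y\<in>Lev j k. \<integral>\<^sup>+\<omega>. F \<omega> j k y \<partial>M)"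
      if "\<And>j k y. (\<lambda>\<omega>. F \<omega> j k y) \<in> borel_measurable M" for F :: "'w \<Rightarrow> nat \<Rightarrow> nat \<Rightarrow> vertex \<Rightarrow> ennreal"
      using that by (simp add: nn_integral_sum borel_measurable_sum)
    have "(\<integral>\<^sup>+\<omega>. ennreal (Q \<omega>) \<partial>M)
        = (\<integral>\<^sup>+\<omega>. (\<Sum>j\<in>J. \<Sum>k\<in>K j. \<Sum>y\<in>Lev j k. ennreal ((D \<omega> y / w k) powr p)) \<partial>M)"
      unfolding Q_def by (intro nn_integral_cong) (simp add: sum_nonneg)
    also have "\<dots> = (\<Sum>j\<in>J. \<Sum>k\<in>K j. \<Sum>y\<in>Lev j k. \<integral>\<^sup>+\<omega>. ennreal ((D \<omega> y / w k) powr p) \<partial>M)"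
      by (rule int3) simp
    also have "\<dots> \<le> (\<Sum>j\<in>J. \<Sum>k\<in>K j. \<Sum>y\<in>Lev j k. ennreal (g k))"
    proof (intro sum_mono)
      fix j k y assume "y \<in> Lev j k"
      then have "length y = k" unfolding Lev_def by simp
      then show "(\<integral>\<^sup>+\<omega>. ennreal ((D \<omega> y / w k) powr p) \<partial>M) \<le> ennreal (g k)"
        using single[of y] by simp
    qed
    also have "\<dots> = (\<Sum>j\<in>J. \<Sum>k\<in>K j. ennreal (2 ^ (k - j) * g k))"
    proof (intro sum.cong refl)
      fix j k assume j: "j \<in> J" and k: "k \<in> K j"
      have lt: "length (take j c) = j" using j lc unfolding J_def by simp
      have "card (Lev j k) = 2 ^ (k - j)"
        unfolding Lev_def using card_lev[of "take j c" k] lt k unfolding K_def by simp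
      then show "(\<Sum>y\<in>Lev j k. ennreal (g k)) = ennreal (2 ^ (k - j) * g k)"
        using gnn[of k] by (simp add: ennreal_mult ennreal_power[symmetric])
    qed
    also have "\<dots> = ennreal (\<Sum>j\<in>J. \<Sum>k\<in>K j. 2 ^ (k - j) * g k)"
      using gnn by (simp add: sum_nonneg)
    finally show "(\<integral>\<^sup>+\<omega>. ennreal (Q \<omega>) \<partial>M) \<le> ennreal (\<Sum>j\<in>J. \<Sum>k\<in>K j. 2 ^ (k - j) * g k)" .
    have sg': "summable (\<lambda>i. g (N + 1 + i))"
      using summable_ignore_initial_segment[OF sg, of "N + 1"] by (simp add: add.commute)
    have "(\<integral>\<^sup>+\<omega>. T \<omega> \<partial>M) = (\<Sum>i. \<integral>\<^sup>+\<omega>. ennreal ((D \<omega> (map bs [0..<N+1+i]) / w (N+1+i)) powr p) \<partial>M)"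
      unfolding T_def by (rule nn_integral_suminf) simp
    also have "\<dots> \<le> (\<Sum>i. ennreal (g (N + 1 + i)))"
    proof (intro suminf_le summableI)
      fix i
      show "(\<integral>\<^sup>+\<omega>. ennreal ((D \<omega> (map bs [0..<N+1+i]) / w (N+1+i)) powr p) \<partial>M) \<le> ennreal (g (N + 1 + i))"
        using single[of "map bs [0..<N+1+i]"] by (simp only: length_map length_upt) simp
    qed
    also have "\<dots> = ennreal (\<Sum>i. g (N + 1 + i))"
      by (rule suminf_ennreal_eq[OF gnn summable_sums[OF sg']])
    finally show "(\<integral>\<^sup>+\<omega>. T \<omega> \<partial>M) \<le> ennreal (\<Sum>i. g (N + 1 + i))" .
  qed simp
  finally show ?thesis unfolding J_def K_def .
qed



lemma summable_by_decay:
  fixes f :: "nat \<Rightarrow> real"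
  assumes "\<And>k. 0 \<le> f k" "(\<lambda>k. f k * 2 powr (real k / 4)) \<longlonglongrightarrow> 0"
  shows "summable f"
proof -
  have ev: "eventually (\<lambda>k. f k * 2 powr (real k / 4) < 1) sequentially"
    using order_tendstoD(2)[OF assms(2)] by simp
  have geo: "summable (\<lambda>k. ((2::real) powr (- 1 / 4)) ^ k)"
    by (rule summable_geometric) (simp add: powr_less_one)
  show ?thesis
  proof (rule summable_comparison_test_ev[OF _ geo])
    show "eventually (\<lambda>k. norm (f k) \<le> ((2::real) powr (- 1 / 4)) ^ k) sequentially"
      using ev
    proof eventually_elim
      case (elim k)
      have e: "((2::real) powr (- 1 / 4)) ^ k = 2 powr (- real k / 4)"
        by (subst powr_realpow[symmetric]) (auto simp: powr_powr)
      have "f k = f k * 2 powr (real k / 4) * 2 powr (- real k / 4)"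
        by (simp add: mult.assoc powr_add[symmetric])
      also have "\<dots> \<le> 1 * 2 powr (- real k / 4)"
        using elim by (intro mult_right_mono) auto
      finally show ?case using assms(1)[of k] e by simp
    qed
  qed
qed

lemma tail_tendsto:
  fixes f :: "nat \<Rightarrow> real"
  assumes "summable f" "filterlim m at_top F"
  shows "((\<lambda>n. \<Sum>i. f (i + m n)) \<longlongrightarrow> 0) F"
proof -
  have "(\<lambda>k. \<Sum>i. f (i + k)) \<longlonglongrightarrow> 0"
  proof -
    have e: "(\<lambda>k. \<Sum>i. f (i + k)) = (\<lambda>k. suminf f - sum f {..<k})"
      using suminf_split_initial_segment[OF assms(1)] by (auto simp: algebra_simps)
    have "(\<lambda>k. suminf f - sum f {..<k}) \<longlonglongrightarrow> suminf f - suminf f"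
      by (intro tendsto_diff tendsto_const summable_LIMSEQ assms(1))
    then show ?thesis unfolding e by simp
  qed
  then show ?thesis using filterlim_compose[OF _ assms(2)] by blast
qed

lemma g_eq:
  fixes p C :: real
  assumes "p \<ge> 1"
  shows "(C * real k * 2 powr (- real k / p)) powr p / (2 powr (- real k / (4 * p))) powr p
       = C powr p * real k powr p * 2 powr (- 3 * real k / 4)"
proof -
  have a: "(2 powr (- real k / p)) powr p = 2 powr (- real k)" using assms by (simp add: powr_powr)
  have b: "(2 powr (- real k / (4 * p))) powr p = 2 powr (- real k / 4)" using assms by (simp add: powr_powr)
  have c: "2 powr (- real k) / 2 powr (- real k / 4) = (2::real) powr (- 3 * real k / 4)"
    by (simp add: powr_diff[symmetric])
  show ?thesis unfolding powr_mult a b using c by (simp add: field_simps)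
qed

lemma g_summable:
  assumes "p \<ge> 1"
  shows "summable (\<lambda>k. C powr p * real k powr p * 2 powr (- 3 * real k / 4))"
proof (rule summable_by_decay)
  have "(\<lambda>k::nat. real k powr p * 2 powr (- real k / 2)) \<longlonglongrightarrow> 0" by real_asymp
  then have "(\<lambda>k::nat. C powr p * (real k powr p * 2 powr (- real k / 2))) \<longlonglongrightarrow> 0"
    by (rule tendsto_mult_right_zero)
  moreover have "C powr p * real k powr p * 2 powr (- 3 * real k / 4) * 2 powr (real k / 4)
      = C powr p * (real k powr p * 2 powr (- real k / 2))" for k :: nat
  proof -
    have "(2::real) powr (- 3 * real k / 4) * 2 powr (real k / 4) = 2 powr (- 3 * real k / 4 + real k / 4)"
      by (rule powr_add[symmetric])
    also have "- 3 * real k / 4 + real k / 4 = - real k / 2" by simp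
    finally show ?thesis by (simp add: mult.assoc)
  qed
  ultimately show "(\<lambda>k. C powr p * real k powr p * 2 powr (- 3 * real k / 4) * 2 powr (real k / 4)) \<longlonglongrightarrow> 0"
    by presburger
qed simp

lemma Phi_summable:
  shows "summable (\<lambda>j. C powr p * (real j + 1) * (2 * real j) powr p * 2 powr (- real j / 2))"
proof (rule summable_by_decay)
  have "(\<lambda>j::nat. (real j + 1) * (2 * real j) powr p * 2 powr (- real j / 4)) \<longlonglongrightarrow> 0" by real_asymp
  then have "(\<lambda>j::nat. C powr p * ((real j + 1) * (2 * real j) powr p * 2 powr (- real j / 4))) \<longlonglongrightarrow> 0"
    by (rule tendsto_mult_right_zero)
  moreover have "C powr p * (real j + 1) * (2 * real j) powr p * 2 powr (- real j / 2) * 2 powr (real j / 4)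
      = C powr p * ((real j + 1) * (2 * real j) powr p * 2 powr (- real j / 4))" for j :: nat
  proof -
    have "(2::real) powr (- real j / 2) * 2 powr (real j / 4) = 2 powr (- real j / 2 + real j / 4)"
      by (rule powr_add[symmetric])
    also have "- real j / 2 + real j / 4 = - real j / 4" by simp
    finally show ?thesis by (simp add: mult.assoc)
  qed
  ultimately show "(\<lambda>j. C powr p * (real j + 1) * (2 * real j) powr p * 2 powr (- real j / 2) * 2 powr (real j / 4)) \<longlonglongrightarrow> 0"
    by presburger
qed simp


lemma sum_bound:
  fixes p C r :: real and N :: nat
  assumes p: "p \<ge> 1" and rN: "r \<le> real N"
    and g_def: "g = (\<lambda>k::nat. C powr p * real k powr p * 2 powr (- 3 * real k / 4))"
    and Phi_def: "Phi = (\<lambda>j::nat. C powr p * (real j + 1) * (2 * real j) powr p * 2 powr (- real j / 2))"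
  shows "(\<Sum>j\<in>{j. j \<le> N \<and> real N - r \<le> real j}.
            \<Sum>k\<in>{k. j \<le> k \<and> real k + real N - 2 * real j \<le> r}. 2 ^ (k - j) * g k)
         \<le> (\<Sum>i. Phi (i + nat \<lceil>real N - r\<rceil>))"
proof -
  define m where "m = nat \<lceil>real N - r\<rceil>"
  have Phinn: "0 \<le> Phi j" for j unfolding Phi_def by simp
  have sP: "summable Phi" unfolding Phi_def by (rule Phi_summable)
  have inner: "(\<Sum>k\<in>{k. j \<le> k \<and> real k + real N - 2 * real j \<le> r}. 2 ^ (k - j) * g k) \<le> Phi j" for j
  proof -
    let ?K = "{k. j \<le> k \<and> real k + real N - 2 * real j \<le> r}"
    have Ksub: "?K \<subseteq> {j..2*j}" using rN by auto
    have tm: "2 ^ (k - j) * g k \<le> C powr p * (2 * real j) powr p * 2 powr (- real j / 2)" if "k \<in> ?K" for k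
    proof -
      have jk: "j \<le> k" "k \<le> 2 * j" using that Ksub by auto
      have e1: "(2::real) ^ (k - j) = 2 powr (real k - real j)"
        using jk by (simp add: powr_realpow[symmetric] of_nat_diff)
      have "2 ^ (k - j) * g k = C powr p * real k powr p * (2 powr (real k - real j) * 2 powr (- 3 * real k / 4))"
        unfolding g_def e1 by (simp add: algebra_simps)
      also have "2 powr (real k - real j) * 2 powr (- 3 * real k / 4) = (2::real) powr (real k / 4 - real j)"
        by (simp add: powr_add[symmetric] algebra_simps)
      also have "C powr p * real k powr p * (2::real) powr (real k / 4 - real j)
          \<le> C powr p * (2 * real j) powr p * 2 powr (- real j / 2)"
      proof (intro mult_mono mult_left_mono)
        show "real k powr p \<le> (2 * real j) powr p" using jk p by (intro powr_mono2) auto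
        show "(2::real) powr (real k / 4 - real j) \<le> 2 powr (- real j / 2)" using jk by simp
      qed auto
      finally show ?thesis .
    qed
    have "(\<Sum>k\<in>?K. 2 ^ (k - j) * g k) \<le> (\<Sum>k\<in>?K. C powr p * (2 * real j) powr p * 2 powr (- real j / 2))"
      by (rule sum_mono) (rule tm)
    also have "\<dots> = real (card ?K) * (C powr p * (2 * real j) powr p * 2 powr (- real j / 2))" by simp
    also have "\<dots> \<le> (real j + 1) * (C powr p * (2 * real j) powr p * 2 powr (- real j / 2))"
    proof (rule mult_right_mono)
      have "card ?K \<le> card {j..2*j}" by (rule card_mono[OF _ Ksub]) simp
      then show "real (card ?K) \<le> real j + 1" by simp
    qed simp
    also have "\<dots> = Phi j" unfolding Phi_def by (simp add: algebra_simps)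
    finally show ?thesis .
  qed
  have Jsub: "{j. j \<le> N \<and> real N - r \<le> real j} \<subseteq> {m..N}"
    unfolding m_def by (auto simp: nat_le_iff ceiling_le_iff)
  have "(\<Sum>j\<in>{j. j \<le> N \<and> real N - r \<le> real j}.
            \<Sum>k\<in>{k. j \<le> k \<and> real k + real N - 2 * real j \<le> r}. 2 ^ (k - j) * g k)
        \<le> (\<Sum>j\<in>{j. j \<le> N \<and> real N - r \<le> real j}. Phi j)"
    by (rule sum_mono) (rule inner)
  also have "\<dots> \<le> (\<Sum>j\<in>{m..N}. Phi j)"
    by (rule sum_mono2[OF _ Jsub]) (auto simp: Phinn)
  also have "\<dots> \<le> (\<Sum>i\<in>{..<Suc N}. Phi (i + m))"
  proof -
    have "{m..N} \<subseteq> (\<lambda>i. i + m) ` {..<Suc N}"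
    proof
      fix x assume "x \<in> {m..N}"
      then show "x \<in> (\<lambda>i. i + m) ` {..<Suc N}" by (intro image_eqI[where x = "x - m"]) auto
    qed
    then have "(\<Sum>j\<in>{m..N}. Phi j) \<le> (\<Sum>j\<in>(\<lambda>i. i + m) ` {..<Suc N}. Phi j)"
      by (rule sum_mono2[rotated]) (auto simp: Phinn)
    also have "\<dots> \<le> (\<Sum>i\<in>{..<Suc N}. Phi (i + m))"
      using sum_image_le[of "{..<Suc N}" Phi "\<lambda>i. i + m"] Phinn by (simp add: comp_def)
    finally show ?thesis .
  qed
  also have "\<dots> \<le> (\<Sum>i. Phi (i + m))"
    by (rule sum_le_suminf) (auto simp: Phinn sP summable_ignore_initial_segment[OF sP])
  finally show ?thesis unfolding m_def .
qed



lemma eta_lim_meas: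
  assumes "Eta \<in> M \<rightarrow>\<^sub>M fieldM"
  shows "eta_lim Eta bs \<in> borel_measurable M"
  unfolding eta_lim_def
  by (rule borel_measurable_lim_metric) (rule fieldM_comp_meas[OF assms])

lemma restr_meas: "restr A \<in> fieldM \<rightarrow>\<^sub>M fieldM"
proof (rule to_fieldM_meas)
  fix x
  have "(\<lambda>f::field. f x) \<in> borel_measurable fieldM"
    by (rule fieldM_comp_meas[of "\<lambda>f. f"]) simp
  then show "(\<lambda>f. restr A f x) \<in> borel_measurable fieldM"
    unfolding restr_def by (cases "x \<in> A") simp_all
qed

lemma const_restr_meas: "(\<lambda>e::real. restr A (\<lambda>_. e)) \<in> borel \<rightarrow>\<^sub>M fieldM"
  by (rule to_fieldM_meas) (simp add: restr_def)

lemma law_transfer: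
  assumes "X \<in> borel_measurable M" "Y \<in> borel_measurable M" "distr M borel X = distr M borel Y"
    and "F \<in> borel \<rightarrow>\<^sub>M fieldM"
  shows "distr M fieldM (\<lambda>\<omega>. F (X \<omega>)) = distr M fieldM (\<lambda>\<omega>. F (Y \<omega>))"
proof -
  have "distr M fieldM (\<lambda>\<omega>. F (X \<omega>)) = distr (distr M borel X) fieldM F"
    using distr_distr[OF assms(4) assms(1)] by (simp add: comp_def)
  also have "\<dots> = distr (distr M borel Y) fieldM F" using assms(3) by simp
  also have "\<dots> = distr M fieldM (\<lambda>\<omega>. F (Y \<omega>))"
    using distr_distr[OF assms(4) assms(2)] by (simp add: comp_def)
  finally show ?thesis .
qed

lemma N_props:
  assumes "n \<ge> 1"
  shows "real (n - nat \<lfloor>log 2 (real n)\<rfloor>) \<ge> real n - log 2 (real n)"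
    and "n - nat \<lfloor>log 2 (real n)\<rfloor> \<ge> 1"
proof -
  have l0: "0 \<le> log 2 (real n)" using assms by simp
  have "real n < 2 powr real n" using assms
    by (simp add: powr_realpow less_exp)
  then have ln: "log 2 (real n) < real n" using assms by (simp add: log_less_iff)
  have f: "real_of_int \<lfloor>log 2 (real n)\<rfloor> \<le> log 2 (real n)" by simp
  have f0: "0 \<le> \<lfloor>log 2 (real n)\<rfloor>" using l0 by simp
  have "nat \<lfloor>log 2 (real n)\<rfloor> < n" using f ln f0 by linarith
  then show "n - nat \<lfloor>log 2 (real n)\<rfloor> \<ge> 1" by simp
  show "real (n - nat \<lfloor>log 2 (real n)\<rfloor>) \<ge> real n - log 2 (real n)"
    using \<open>nat \<lfloor>log 2 (real n)\<rfloor> < n\<close> f f0 by (simp add: of_nat_diff)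
qed

lemma N_tendsto: "filterlim (\<lambda>n. n - nat \<lfloor>log 2 (real n)\<rfloor>) at_top sequentially"
proof (subst filterlim_at_top, intro allI)
  fix Z :: nat
  have "filterlim (\<lambda>n::nat. real n - log 2 (real n)) at_top sequentially" by real_asymp
  then have "eventually (\<lambda>n. real n - log 2 (real n) \<ge> real Z) sequentially"
    by (simp add: filterlim_at_top)
  moreover have "eventually (\<lambda>n::nat. n \<ge> 1) sequentially" by (rule eventually_ge_at_top)
  ultimately show "eventually (\<lambda>n. Z \<le> n - nat \<lfloor>log 2 (real n)\<rfloor>) sequentially"
  proof eventually_elim
    case (elim n)
    then have "real Z \<le> real (n - nat \<lfloor>log 2 (real n)\<rfloor>)" using N_props(1)[of n] by linarith
    then show ?case by linarith
  qed
qed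

lemma m_tendsto:
  fixes p \<epsilon> :: real
  assumes "p \<ge> 1" "\<epsilon> > 0" "filterlim Nf at_top sequentially"
  shows "filterlim (\<lambda>n. nat \<lceil>real (Nf n) - (real (Nf n) / p - (1 + \<epsilon>) * log 2 (real (Nf n)))\<rceil>) at_top sequentially"
proof (subst filterlim_at_top, intro allI)
  fix Z :: nat
  have lg: "filterlim (\<lambda>x::real. log 2 x) at_top at_top" by real_asymp
  have "filterlim (\<lambda>n. real (Nf n)) at_top sequentially"
    by (rule filterlim_compose[OF filterlim_real_sequentially assms(3)])
  then have "filterlim (\<lambda>n. log 2 (real (Nf n))) at_top sequentially"
    by (rule filterlim_compose[OF lg])
  then have "eventually (\<lambda>n. log 2 (real (Nf n)) \<ge> real Z) sequentially"
    by (simp add: filterlim_at_top)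
  moreover have "eventually (\<lambda>n. Nf n \<ge> 1) sequentially"
    using assms(3) by (simp add: filterlim_at_top)
  ultimately show "eventually (\<lambda>n. Z \<le> nat \<lceil>real (Nf n) - (real (Nf n) / p - (1 + \<epsilon>) * log 2 (real (Nf n)))\<rceil>) sequentially"
  proof eventually_elim
    case (elim n)
    have l0: "0 \<le> log 2 (real (Nf n))" using elim by simp
    have "real (Nf n) / p \<le> real (Nf n)" using assms(1) mult_left_mono[OF assms(1), of "real (Nf n)"] by (simp add: divide_le_eq)
    then have "real Z \<le> real (Nf n) - (real (Nf n) / p - (1 + \<epsilon>) * log 2 (real (Nf n)))"
    proof -
      have "0 \<le> (1 + \<epsilon>) * log 2 (real (Nf n))" using l0 assms(2) by simp
      moreover have "(1 + \<epsilon>) * log 2 (real (Nf n)) \<ge> log 2 (real (Nf n))" using l0 assms(2)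
        by (simp add: algebra_simps)
      ultimately show ?thesis using \<open>real (Nf n) / p \<le> real (Nf n)\<close> elim by linarith
    qed
    then show ?case
    proof -
      assume h: "real Z \<le> real (Nf n) - (real (Nf n) / p - (1 + \<epsilon>) * log 2 (real (Nf n)))"
      define x where "x = real (Nf n) - (real (Nf n) / p - (1 + \<epsilon>) * log 2 (real (Nf n)))"
      have "real Z \<le> real_of_int \<lceil>x\<rceil>" using h le_of_int_ceiling[of x] unfolding x_def by linarith
      then have "int Z \<le> \<lceil>x\<rceil>" by linarith
      then show ?thesis unfolding x_def[symmetric] by linarith
    qed
  qed
qed



theorem corollary1p11:
  fixes p \<epsilon> \<delta> :: real and xs :: "nat \<Rightarrow> vertex"
    and M :: "'w measure" and H Eta :: "'w \<Rightarrow> field"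
  assumes "p \<ge> 1" and "\<epsilon> > 0"
    and "log_dyadic \<delta>" and "0 \<le> \<delta>" and "\<delta> < 1"
    and "\<forall>n\<ge>1. xs n \<in> L_lev n"
    and "plus_coupling \<delta> M H Eta"
  defines "A \<equiv> (\<lambda>n::nat. let n' = n - nat \<lfloor>log 2 (real n)\<rfloor>;
                      r = real n' / p - (1 + \<epsilon>) * log 2 (real n')
                  in ball_T r (xs n'))"
    and "Einf \<equiv> eta_lim Eta (\<lambda>_. False)"
  shows "(\<lambda>n. Wass p (distr M fieldM (\<lambda>\<omega>. restr (A n) (Eta \<omega>)))
                    (distr M fieldM (\<lambda>\<omega>. restr (A n) (\<lambda>_. Einf \<omega>)))) \<longlonglongrightarrow> 0
     \<and> (\<exists>J :: nat \<Rightarrow> (field \<times> real) measure.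
          (\<forall>n. J n \<in> couplings fieldM borel Pgauss (distr M borel Einf)) \<and>
          (\<lambda>n. Wass p (restr_law (A n) (Pplus \<delta>))
                      (distr (J n) fieldM (\<lambda>(f, e). restr (A n) (\<lambda>x. f x + e)))) \<longlonglongrightarrow> 0)"
proof -
  note p = assms(1)
  have PM: "prob_space M" and mH: "H \<in> M \<rightarrow>\<^sub>M fieldM" and mEta: "Eta \<in> M \<rightarrow>\<^sub>M fieldM"
    and lawH: "distr M fieldM H = Pgauss"
    and lawPlus: "distr M fieldM (\<lambda>\<omega>. \<lambda>x. H \<omega> x + Eta \<omega> x) = Pplus \<delta>"
    and momq: "\<forall>q\<ge>1. \<exists>C. \<forall>y b.
        (\<integral>\<^sup>+\<omega>. ennreal (\<bar>Eta \<omega> (y @ [b]) - Eta \<omega> y\<bar> powr q) \<partial>M)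
          \<le> ennreal ((C * real (length (y @ [b])) * 2 powr (- real (length (y @ [b])) / q)) powr q)"
    and convAE: "\<forall>bs. AE \<omega> in M. convergent (\<lambda>n. Eta \<omega> (map bs [0..<n]))"
    and lawLim: "\<forall>bs bs'. distr M borel (eta_lim Eta bs) = distr M borel (eta_lim Eta bs')"
    using assms(7) unfolding plus_coupling_def by auto
  obtain C where mom: "\<And>y b. (\<integral>\<^sup>+\<omega>. ennreal (\<bar>Eta \<omega> (y @ [b]) - Eta \<omega> y\<bar> powr p) \<partial>M)
          \<le> ennreal ((C * real (length (y @ [b])) * 2 powr (- real (length (y @ [b])) / p)) powr p)"
    using momq p by blast
  define Nf where "Nf = (\<lambda>n::nat. n - nat \<lfloor>log 2 (real n)\<rfloor>)"
  define rf where "rf = (\<lambda>n. real (Nf n) / p - (1 + \<epsilon>) * log 2 (real (Nf n)))"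
  define cf where "cf = (\<lambda>n. xs (Nf n))"
  define bsf where "bsf = (\<lambda>n i. if i < Nf n then cf n ! i else False)"
  define Lf where "Lf = (\<lambda>n. eta_lim Eta (bsf n))"
  have A_eq: "A n = ball_T (rf n) (cf n)" for n
    unfolding A_def rf_def cf_def Nf_def Let_def ..
  define w where "w = (\<lambda>k::nat. 2 powr (- real k / (4 * p)))"
  define S where "S = (\<Sum>i. w i)"
  define g where "g = (\<lambda>k::nat. (C * real k * 2 powr (- real k / p)) powr p / w k powr p)"
  define Phi where "Phi = (\<lambda>j::nat. C powr p * (real j + 1) * (2 * real j) powr p * 2 powr (- real j / 2))"
  define m where "m = (\<lambda>n. nat \<lceil>real (Nf n) - rf n\<rceil>)"
  define B where "B = (\<lambda>n. (3 * S) powr p * ((\<Sum>i. Phi (i + m n)) + (\<Sum>i. g (Nf n + 1 + i))))"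
  have g_eq': "g = (\<lambda>k::nat. C powr p * real k powr p * 2 powr (- 3 * real k / 4))"
    unfolding g_def w_def using g_eq[OF p] by (intro ext) simp
  have sg: "summable g" unfolding g_eq' by (rule g_summable[OF p])
  have sP: "summable Phi" unfolding Phi_def by (rule Phi_summable)
  have gnn: "0 \<le> g k" for k unfolding g_eq' by simp
  have Pnn: "0 \<le> Phi k" for k unfolding Phi_def by simp
  have sgN: "summable (\<lambda>i. g (N' + 1 + i))" for N'
    using summable_ignore_initial_segment[OF sg, of "N' + 1"] by (simp add: add.commute)
  have sPm: "summable (\<lambda>i. Phi (i + m'))" for m'
    using summable_ignore_initial_segment[OF sP, of "m'"] by simp
  have Bnn: "0 \<le> B n" for n
    unfolding B_def using gnn Pnn
    by (intro mult_nonneg_nonneg add_nonneg_nonneg suminf_nonneg sPm sgN) auto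
  have NT: "filterlim Nf at_top sequentially" unfolding Nf_def by (rule N_tendsto)
  have mT: "filterlim m at_top sequentially" unfolding m_def rf_def by (rule m_tendsto[OF p assms(2) NT])
  have NT1: "filterlim (\<lambda>n. Nf n + 1) at_top sequentially"
    by (rule filterlim_subseq[THEN filterlim_compose[OF _ NT]]) (simp add: strict_mono_def) 
  have B0: "B \<longlonglongrightarrow> 0"
  proof -
    have t1: "(\<lambda>n. \<Sum>i. Phi (i + m n)) \<longlonglongrightarrow> 0" by (rule tail_tendsto[OF sP mT])
    have t2: "(\<lambda>n. \<Sum>i. g (i + (Nf n + 1))) \<longlonglongrightarrow> 0" by (rule tail_tendsto[OF sg NT1])
    have "(\<lambda>n. (3 * S) powr p * ((\<Sum>i. Phi (i + m n)) + (\<Sum>i. g (i + (Nf n + 1))))) \<longlonglongrightarrow> (3 * S) powr p * (0 + 0)"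
      by (intro tendsto_mult tendsto_add tendsto_const t1 t2)
    then show ?thesis unfolding B_def by (simp add: add.commute add.left_commute)
  qed
  have [measurable]: "(\<lambda>\<omega>. Eta \<omega> y) \<in> borel_measurable M" for y by (rule fieldM_comp_meas[OF mEta])
  have [measurable]: "(\<lambda>\<omega>. H \<omega> y) \<in> borel_measurable M" for y by (rule fieldM_comp_meas[OF mH])
  have mL: "Lf n \<in> borel_measurable M" for n unfolding Lf_def by (rule eta_lim_meas[OF mEta])
  have mE: "Einf \<in> borel_measurable M" unfolding Einf_def by (rule eta_lim_meas[OF mEta])
  have lawL: "distr M borel (Lf n) = distr M borel Einf" for n
    unfolding Lf_def Einf_def using lawLim by blast
  have core: "(\<integral>\<^sup>+\<omega>. (SUP x. (if x \<in> A n then ennreal (\<bar>Eta \<omega> x - Lf n \<omega>\<bar> powr p) else 0)) \<partial>M)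
      \<le> ennreal (B n)" if n1: "n \<ge> 1" for n
  proof -
    have N1: "Nf n \<ge> 1" unfolding Nf_def using N_props(2)[OF n1] .
    have lc: "length (cf n) = Nf n" unfolding cf_def using assms(6) N1 by (simp add: L_lev_def)
    have rN: "rf n \<le> real (Nf n)"
    proof -
      have "0 \<le> log 2 (real (Nf n))" using N1 by simp
      moreover have "real (Nf n) / p \<le> real (Nf n)" using p mult_left_mono[OF p, of "real (Nf n)"] by (simp add: divide_le_eq)
      ultimately show ?thesis unfolding rf_def using assms(2) by (simp add: algebra_simps)
           (smt (verit) mult_nonneg_nonneg)
    qed
    have bs: "\<And>i. i < Nf n \<Longrightarrow> bsf n i = cf n ! i" unfolding bsf_def by simp
    have "(\<integral>\<^sup>+\<omega>. (SUP x. (if x \<in> A n then ennreal (\<bar>Eta \<omega> x - Lf n \<omega>\<bar> powr p) else 0)) \<partial>M)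
      \<le> ennreal ((3 * S) powr p) *
        (ennreal (\<Sum>j\<in>{j. j \<le> Nf n \<and> real (Nf n) - rf n \<le> real j}.
                 \<Sum>k\<in>{k. j \<le> k \<and> real k + real (Nf n) - 2 * real j \<le> rf n}. 2 ^ (k - j) * g k)
         + ennreal (\<Sum>i. g (Nf n + 1 + i)))"
      unfolding A_eq
      by (rule integral_bound[OF p lc bs mEta spec[OF convAE] _ mom w_def S_def g_def sg])
         (auto simp: Lf_def eta_lim_def fun_eq_iff)
    also have "\<dots> \<le> ennreal ((3 * S) powr p) * (ennreal (\<Sum>i. Phi (i + m n)) + ennreal (\<Sum>i. g (Nf n + 1 + i)))"
      unfolding m_def
      by (intro mult_left_mono add_mono ennreal_leI sum_bound[OF p rN g_eq' Phi_def]) auto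
    also have "\<dots> = ennreal (B n)"
      unfolding B_def
      using Pnn gnn suminf_nonneg[OF sPm[of "m n"]] suminf_nonneg[OF sgN[of "Nf n"]]
      by (simp add: ennreal_mult' flip: ennreal_plus)
    finally show ?thesis .
  qed
  have restr_diff: "\<And>f1 f2 x. (SUP x. ennreal (\<bar>restr (A n) f1 x - restr (A n) f2 x\<bar> powr p))
       = (SUP x. (if x \<in> A n then ennreal (\<bar>f1 x - f2 x\<bar> powr p) else 0))" for n
    by (intro SUP_cong refl) (simp add: restr_def)
  have part1: "eventually (\<lambda>n. Wpow p (distr M fieldM (\<lambda>\<omega>. restr (A n) (Eta \<omega>)))
                    (distr M fieldM (\<lambda>\<omega>. restr (A n) (\<lambda>_. Einf \<omega>))) \<le> ennreal (B n)) sequentially"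
    using eventually_ge_at_top[of "1::nat"]
  proof eventually_elim
    case (elim n)
    have eq2: "distr M fieldM (\<lambda>\<omega>. restr (A n) (\<lambda>_. Einf \<omega>)) = distr M fieldM (\<lambda>\<omega>. restr (A n) (\<lambda>_. Lf n \<omega>))"
      using law_transfer[OF mE mL lawL[symmetric] const_restr_meas] by simp
    have m1: "(\<lambda>\<omega>. restr (A n) (Eta \<omega>)) \<in> M \<rightarrow>\<^sub>M fieldM"
      using measurable_compose[OF mEta restr_meas] by (simp add: comp_def)
    have m2: "(\<lambda>\<omega>. restr (A n) (\<lambda>_. Lf n \<omega>)) \<in> M \<rightarrow>\<^sub>M fieldM"
      using measurable_compose[OF mL const_restr_meas] by (simp add: comp_def)
    have "Wpow p (distr M fieldM (\<lambda>\<omega>. restr (A n) (Eta \<omega>))) (distr M fieldM (\<lambda>\<omega>. restr (A n) (\<lambda>_. Einf \<omega>)))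
        \<le> (\<integral>\<^sup>+\<omega>. (SUP x. ennreal (\<bar>restr (A n) (Eta \<omega>) x - restr (A n) (\<lambda>_. Lf n \<omega>) x\<bar> powr p)) \<partial>M)"
      unfolding eq2 by (rule Wpow_le[OF PM m1 m2])
    also have "\<dots> = (\<integral>\<^sup>+\<omega>. (SUP x. (if x \<in> A n then ennreal (\<bar>Eta \<omega> x - Lf n \<omega>\<bar> powr p) else 0)) \<partial>M)"
      by (simp only: restr_diff)
    also have "\<dots> \<le> ennreal (B n)" by (rule core[OF elim])
    finally show ?case .
  qed
  define J where "J = (\<lambda>n. distr M (fieldM \<Otimes>\<^sub>M borel) (\<lambda>\<omega>. (H \<omega>, Lf n \<omega>)))"
  have mJ: "(\<lambda>\<omega>. (H \<omega>, Lf n \<omega>)) \<in> M \<rightarrow>\<^sub>M fieldM \<Otimes>\<^sub>M borel" for n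
    using mH mL[of n] by measurable
  have coup: "J n \<in> couplings fieldM borel Pgauss (distr M borel Einf)" for n
    unfolding couplings_def
  proof (intro CollectI conjI)
    show "prob_space (J n)" unfolding J_def using mJ prob_space.prob_space_distr[OF PM] by blast
    show "sets (J n) = sets (fieldM \<Otimes>\<^sub>M borel)" unfolding J_def by simp
    show "distr (J n) fieldM fst = Pgauss"
      unfolding J_def lawH[symmetric] using distr_distr[OF measurable_fst mJ] by (simp add: comp_def)
    show "distr (J n) borel snd = distr M borel Einf"
      unfolding J_def lawL[of n, symmetric] using distr_distr[OF measurable_snd mJ] by (simp add: comp_def)
  qed
  have mG: "(\<lambda>(f, e). restr (A n) (\<lambda>x. f x + e)) \<in> fieldM \<Otimes>\<^sub>M borel \<rightarrow>\<^sub>M fieldM" for n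
  proof (rule to_fieldM_meas)
    fix x
    have a: "(\<lambda>z::field \<times> real. fst z x) \<in> borel_measurable (fieldM \<Otimes>\<^sub>M borel)"
      by (rule fieldM_comp_meas[of fst]) simp
    have "(\<lambda>z::field \<times> real. if x \<in> A n then fst z x + snd z else 0) \<in> borel_measurable (fieldM \<Otimes>\<^sub>M borel)"
      using a by measurable
    then show "(\<lambda>z. (case z of (f, e) \<Rightarrow> restr (A n) (\<lambda>x. f x + e)) x) \<in> borel_measurable (fieldM \<Otimes>\<^sub>M borel)"
      by (simp add: restr_def case_prod_beta)
  qed
  have mHE: "(\<lambda>\<omega>. \<lambda>x. H \<omega> x + Eta \<omega> x) \<in> M \<rightarrow>\<^sub>M fieldM"
    by (rule to_fieldM_meas) simp
  have part2: "eventually (\<lambda>n. Wpow p (restr_law (A n) (Pplus \<delta>))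
                      (distr (J n) fieldM (\<lambda>(f, e). restr (A n) (\<lambda>x. f x + e))) \<le> ennreal (B n)) sequentially"
    using eventually_ge_at_top[of "1::nat"]
  proof eventually_elim
    case (elim n)
    have e1: "restr_law (A n) (Pplus \<delta>) = distr M fieldM (\<lambda>\<omega>. restr (A n) (\<lambda>x. H \<omega> x + Eta \<omega> x))"
      unfolding restr_law_def lawPlus[symmetric] using distr_distr[OF restr_meas mHE] by (simp add: comp_def)
    have e2: "distr (J n) fieldM (\<lambda>(f, e). restr (A n) (\<lambda>x. f x + e))
        = distr M fieldM (\<lambda>\<omega>. restr (A n) (\<lambda>x. H \<omega> x + Lf n \<omega>))"
      unfolding J_def using distr_distr[OF mG mJ] by (simp add: comp_def)
    have m1: "(\<lambda>\<omega>. restr (A n) (\<lambda>x. H \<omega> x + Eta \<omega> x)) \<in> M \<rightarrow>\<^sub>M fieldM"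
      using measurable_compose[OF mHE restr_meas] by (simp add: comp_def)
    have m2: "(\<lambda>\<omega>. restr (A n) (\<lambda>x. H \<omega> x + Lf n \<omega>)) \<in> M \<rightarrow>\<^sub>M fieldM"
      using measurable_compose[OF mJ mG] by (simp add: comp_def)
    have "Wpow p (restr_law (A n) (Pplus \<delta>)) (distr (J n) fieldM (\<lambda>(f, e). restr (A n) (\<lambda>x. f x + e)))
        \<le> (\<integral>\<^sup>+\<omega>. (SUP x. ennreal (\<bar>restr (A n) (\<lambda>x. H \<omega> x + Eta \<omega> x) x - restr (A n) (\<lambda>x. H \<omega> x + Lf n \<omega>) x\<bar> powr p)) \<partial>M)"
      unfolding e1 e2 by (rule Wpow_le[OF PM m1 m2])
    also have "\<dots> = (\<integral>\<^sup>+\<omega>. (SUP x. (if x \<in> A n then ennreal (\<bar>Eta \<omega> x - Lf n \<omega>\<bar> powr p) else 0)) \<partial>M)"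
      by (simp only: restr_diff) simp
    also have "\<dots> \<le> ennreal (B n)" by (rule core[OF elim])
    finally show ?case .
  qed
  show ?thesis
  proof
    show "(\<lambda>n. Wass p (distr M fieldM (\<lambda>\<omega>. restr (A n) (Eta \<omega>)))
                    (distr M fieldM (\<lambda>\<omega>. restr (A n) (\<lambda>_. Einf \<omega>)))) \<longlonglongrightarrow> 0"
      by (rule Wass_tendsto[OF p part1 B0 Bnn])
    show "\<exists>J :: nat \<Rightarrow> (field \<times> real) measure.
          (\<forall>n. J n \<in> couplings fieldM borel Pgauss (distr M borel Einf)) \<and>
          (\<lambda>n. Wass p (restr_law (A n) (Pplus \<delta>))
                      (distr (J n) fieldM (\<lambda>(f, e). restr (A n) (\<lambda>x. f x + e)))) \<longlonglongrightarrow> 0"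
      using coup Wass_tendsto[OF p part2 B0 Bnn] by blast
  qed
qed


end
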